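(* Let $G\neq 1$ be a finite group with $G=AB$ for subgroups $A,B$. The following are pairwise equivalent: (1) $G=AB$ is a core-factorisation. (2) There is a normal series $1=N_0\trianglelefteq N_1\trianglelefteq\cdots\trianglelefteq N_n=G$ of $G$ (all $N_i\trianglelefteq G$) such that for each $1\le i\le n$, either $N_i/N_{i-1}\le AN_{i-1}/N_{i-1}$ or $N_i/N_{i-1}\le BN_{i-1}/N_{i-1}$. (3) For every proper normal subgroup $K$ of $G$ there is a normal subgroup $M$ of $G$ with $K<M$ such that $M/K\le AK/K$ or $M/K\le BK/K$. Moreover, in (1) and (2), each term $N_i$ of such a (chief, resp. normal) series satisfies $N_i=(N_i\cap A)(N_i\cap B)$, and for $N_i\neq 1$ the factorisation $N_i=(N_i\cap A)(N_i\cap B)$ is again a core-factorisation.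
   Context: All groups are finite. A subgroup $U$ of $G$ covers a section $V/W$ ($W\trianglelefteq V\le G$) if $W(U\cap V)=V$. If $1\neq G=AB$ is a product of subgroups $A$ and $B$, then $G=AB$ is called a core-factorisation if $G$ possesses a chief series each of whose chief factors is covered by $A$ or by $B$. *)

theory Defs
  imports "HOL-Algebra.Algebra"
begin

definition normal_series :: "('a, 'b) monoid_scheme \<Rightarrow> 'a set list \<Rightarrow> bool" where
  "normal_series G Ns \<longleftrightarrow> Ns \<noteq> [] \<and> hd Ns = {\<one>\<^bsub>G\<^esub>} \<and> last Ns = carrier G \<and>
     (\<forall>N\<in>set Ns. N \<lhd> G) \<and> (\<forall>i. Suc i < length Ns \<longrightarrow> Ns ! i \<subseteq> Ns ! Suc i)"

definition chief_series :: "('a, 'b) monoid_scheme \<Rightarrow> 'a set list \<Rightarrow> bool" where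
  "chief_series G Ns \<longleftrightarrow> normal_series G Ns \<and>
     (\<forall>i. Suc i < length Ns \<longrightarrow> Ns ! i \<subset> Ns ! Suc i \<and>
        (\<forall>M. M \<lhd> G \<longrightarrow> Ns ! i \<subseteq> M \<longrightarrow> M \<subseteq> Ns ! Suc i \<longrightarrow> M = Ns ! i \<or> M = Ns ! Suc i))"

definition covers :: "('a, 'b) monoid_scheme \<Rightarrow> 'a set \<Rightarrow> 'a set \<Rightarrow> 'a set \<Rightarrow> bool" where
  "covers G U V W \<longleftrightarrow> set_mult G W (U \<inter> V) = V"

definition chief_covered :: "('a, 'b) monoid_scheme \<Rightarrow> 'a set \<Rightarrow> 'a set \<Rightarrow> 'a set list \<Rightarrow> bool" where
  "chief_covered G A B Ns \<longleftrightarrow> chief_series G Ns \<and>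
     (\<forall>i. Suc i < length Ns \<longrightarrow> covers G A (Ns ! Suc i) (Ns ! i) \<or> covers G B (Ns ! Suc i) (Ns ! i))"

definition core_factorisation :: "('a, 'b) monoid_scheme \<Rightarrow> 'a set \<Rightarrow> 'a set \<Rightarrow> bool" where
  "core_factorisation G A B \<longleftrightarrow> carrier G \<noteq> {\<one>\<^bsub>G\<^esub>} \<and> subgroup A G \<and> subgroup B G \<and>
     set_mult G A B = carrier G \<and> (\<exists>Ns. chief_covered G A B Ns)"

text \<open>The quotient inclusion V/W \<le> XW/W (W \<subseteq> V, W normal), stated literally with
  the quotient groups as sets of right cosets of W.\<close>
definition quot_le :: "('a, 'b) monoid_scheme \<Rightarrow> 'a set \<Rightarrow> 'a set \<Rightarrow> 'a set \<Rightarrow> bool" where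
  "quot_le G V W U \<longleftrightarrow> (r_coset G W) ` V \<subseteq> (r_coset G W) ` (set_mult G U W)"

definition normal_covered :: "('a, 'b) monoid_scheme \<Rightarrow> 'a set \<Rightarrow> 'a set \<Rightarrow> 'a set list \<Rightarrow> bool" where
  "normal_covered G A B Ns \<longleftrightarrow> normal_series G Ns \<and>
     (\<forall>i. Suc i < length Ns \<longrightarrow> quot_le G (Ns ! Suc i) (Ns ! i) A \<or> quot_le G (Ns ! Suc i) (Ns ! i) B)"

end

theory Submission
  imports Defs
begin

lemma mem_set_mult: "x \<in> H <#>\<^bsub>G\<^esub> K \<longleftrightarrow> (\<exists>h\<in>H. \<exists>k\<in>K. x = h \<otimes>\<^bsub>G\<^esub> k)"
  by (auto simp: set_mult_def)

definition sser :: "('a,'b) monoid_scheme \<Rightarrow> 'a set \<Rightarrow> 'a set \<Rightarrow> 'a set list \<Rightarrow> bool" where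
  "sser G A B Ns \<longleftrightarrow> normal_series G Ns \<and>
     (\<forall>i. Suc i < length Ns \<longrightarrow> Ns!Suc i \<subseteq> A <#>\<^bsub>G\<^esub> Ns!i \<or> Ns!Suc i \<subseteq> B <#>\<^bsub>G\<^esub> Ns!i)"

definition P3 :: "('a,'b) monoid_scheme \<Rightarrow> 'a set \<Rightarrow> 'a set \<Rightarrow> bool" where
  "P3 G A B \<longleftrightarrow> (\<forall>K. K \<lhd> G \<longrightarrow> K \<noteq> carrier G \<longrightarrow>
     (\<exists>M. M \<lhd> G \<and> K \<subset> M \<and> (M \<subseteq> A <#>\<^bsub>G\<^esub> K \<or> M \<subseteq> B <#>\<^bsub>G\<^esub> K)))"

definition chainc :: "('a,'b) monoid_scheme \<Rightarrow> 'a set \<Rightarrow> 'a set \<Rightarrow> 'a set \<Rightarrow> 'a set list \<Rightarrow> bool" where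
  "chainc G A B K Ns \<longleftrightarrow> Ns \<noteq> [] \<and> hd Ns = K \<and> last Ns = carrier G \<and> (\<forall>N\<in>set Ns. N \<lhd> G) \<and>
     (\<forall>i. Suc i < length Ns \<longrightarrow> Ns ! i \<subset> Ns ! Suc i \<and>
        (\<forall>M. M \<lhd> G \<longrightarrow> Ns ! i \<subseteq> M \<longrightarrow> M \<subseteq> Ns ! Suc i \<longrightarrow> M = Ns ! i \<or> M = Ns ! Suc i) \<and>
        (covers G A (Ns ! Suc i) (Ns ! i) \<or> covers G B (Ns ! Suc i) (Ns ! i)))"

lemma asc_mono:
  assumes "\<forall>i. Suc i < length Ns \<longrightarrow> Ns!i \<subseteq> Ns!Suc i"
  shows "j < length Ns \<Longrightarrow> i \<le> j \<Longrightarrow> Ns!i \<subseteq> Ns!j"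
proof (induction j)
  case 0 thus ?case by simp
next
  case (Suc j)
  show ?case
  proof (cases "i = Suc j")
    case False
    hence "Ns!i \<subseteq> Ns!j" using Suc by simp
    moreover have "Ns!j \<subseteq> Ns!Suc j" using assms Suc.prems(1) by blast
    ultimately show ?thesis by blast
  qed simp
qed

lemma set_mult_restr: "set_mult (G\<lparr>carrier := N\<rparr>) = set_mult G"
  by (intro ext) (simp add: set_mult_def)

context group begin

lemma cancel1: "x \<in> carrier G \<Longrightarrow> y \<in> carrier G \<Longrightarrow> x \<otimes> (inv x \<otimes> y) = y"
  by (metis inv_closed l_one m_assoc r_inv)
lemma cancel2: "x \<in> carrier G \<Longrightarrow> y \<in> carrier G \<Longrightarrow> inv x \<otimes> (x \<otimes> y) = y"
  by (metis inv_closed l_one m_assoc l_inv)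
lemmas gsimps = m_assoc cancel1 cancel2

lemma conj_in: "N \<lhd> G \<Longrightarrow> x \<in> carrier G \<Longrightarrow> h \<in> N \<Longrightarrow> inv x \<otimes> h \<otimes> x \<in> N"
  by (rule normal.inv_op_closed1)

lemma swapAK:
  assumes K: "K \<lhd> G" and a: "a \<in> carrier G" and k: "k \<in> K"
  shows "k \<otimes> a = a \<otimes> (inv a \<otimes> k \<otimes> a)" and "inv a \<otimes> k \<otimes> a \<in> K"
proof -
  have kc: "k \<in> carrier G" using subgroup.mem_carrier[OF normal_imp_subgroup[OF K] k] .
  show "k \<otimes> a = a \<otimes> (inv a \<otimes> k \<otimes> a)" using a kc by (simp add: gsimps)
  show "inv a \<otimes> k \<otimes> a \<in> K" using conj_in[OF K a k] .
qed

lemma QL: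
  assumes W: "W \<lhd> G" and U: "U \<subseteq> carrier G" and V: "V \<subseteq> carrier G"
  shows "quot_le G V W U \<longleftrightarrow> V \<subseteq> U <#> W"
proof
  assume "V \<subseteq> U <#> W" thus "quot_le G V W U" unfolding quot_le_def by blast
next
  assume q: "quot_le G V W U"
  have Ws: "subgroup W G" using normal_imp_subgroup[OF W] .
  show "V \<subseteq> U <#> W"
  proof
    fix v assume v: "v \<in> V"
    then obtain y where y: "y \<in> U <#> W" "W #> v = W #> y" using q unfolding quot_le_def by blast
    then obtain u w where uw: "u \<in> U" "w \<in> W" "y = u \<otimes> w" unfolding mem_set_mult by blast
    have vc: "v \<in> carrier G" using v V by blast
    have "\<one> \<otimes> v \<in> W #> v" unfolding r_coset_def using subgroup.one_closed[OF Ws] by blast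
    hence "v \<in> W #> y" using y vc by simp
    then obtain w' where w': "w' \<in> W" "v = w' \<otimes> y" using y unfolding r_coset_def by blast
    have uc: "u \<in> carrier G" using uw U by blast
    have wc: "w \<in> carrier G" "w' \<in> carrier G" using uw w' Ws[THEN subgroup.subset] by blast+
    have "u \<otimes> ((inv u \<otimes> w' \<otimes> u) \<otimes> w) = w' \<otimes> (u \<otimes> w)" using uc wc by (simp add: gsimps)
    hence "v = u \<otimes> ((inv u \<otimes> w' \<otimes> u) \<otimes> w)" using w'(2) uw(3) by simp
    moreover have "(inv u \<otimes> w' \<otimes> u) \<otimes> w \<in> W"
      using conj_in[OF W uc w'(1)] uw(2) subgroup.m_closed[OF Ws] by blast
    ultimately show "v \<in> U <#> W" unfolding mem_set_mult using uw by blast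
  qed
qed

lemma normal_mult:
  assumes K: "K \<lhd> G" and N: "N \<lhd> G" shows "K <#> N \<lhd> G"
proof -
  have sg: "subgroup (K <#> N) G" using mult_norm_subgroup[OF K normal_imp_subgroup[OF N]] .
  have Ks: "subgroup K G" and Ns: "subgroup N G" using normal_imp_subgroup[OF K] normal_imp_subgroup[OF N] by auto
  have "\<forall>x\<in>carrier G. \<forall>h\<in>K <#> N. x \<otimes> h \<otimes> inv x \<in> K <#> N"
  proof (intro ballI)
    fix x h assume x: "x \<in> carrier G" and h: "h \<in> K <#> N"
    then obtain k n where kn: "k \<in> K" "n \<in> N" "h = k \<otimes> n" unfolding mem_set_mult by blast
    have kc: "k \<in> carrier G" "n \<in> carrier G" using kn Ks[THEN subgroup.subset] Ns[THEN subgroup.subset] by blast+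
    have "x \<otimes> h \<otimes> inv x = (x \<otimes> k \<otimes> inv x) \<otimes> (x \<otimes> n \<otimes> inv x)"
      using x kc kn(3) by (simp add: gsimps)
    moreover have "x \<otimes> k \<otimes> inv x \<in> K" "x \<otimes> n \<otimes> inv x \<in> N"
      using normal.inv_op_closed2[OF K x kn(1)] normal.inv_op_closed2[OF N x kn(2)] by auto
    ultimately show "x \<otimes> h \<otimes> inv x \<in> K <#> N" unfolding mem_set_mult by blast
  qed
  thus ?thesis using sg normal_inv_iff by blast
qed

lemma SUB:
  assumes K: "K \<lhd> G" and T: "T \<subseteq> A <#> K" and A: "A \<subseteq> carrier G"
  shows "K <#> T \<subseteq> A <#> K"
proof
  fix z assume "z \<in> K <#> T"
  then obtain k x where kx: "k \<in> K" "x \<in> T" "z = k \<otimes> x" unfolding mem_set_mult by blast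
  have "x \<in> A <#> K" using kx(2) T by blast
  then obtain a k' where ak: "a \<in> A" "k' \<in> K" "x = a \<otimes> k'" unfolding mem_set_mult by blast
  have Ks: "subgroup K G" using normal_imp_subgroup[OF K] .
  have c: "a \<in> carrier G" "k \<in> carrier G" "k' \<in> carrier G" using ak kx A Ks[THEN subgroup.subset] by blast+
  have "z = a \<otimes> ((inv a \<otimes> k \<otimes> a) \<otimes> k')"
  proof -
    have "a \<otimes> ((inv a \<otimes> k \<otimes> a) \<otimes> k') = k \<otimes> (a \<otimes> k')" using c by (simp add: gsimps)
    thus ?thesis using kx(3) ak(3) by simp
  qed
  moreover have "(inv a \<otimes> k \<otimes> a) \<otimes> k' \<in> K"
    using conj_in[OF K c(1) kx(1)] ak(2) subgroup.m_closed[OF Ks] by blast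
  ultimately show "z \<in> A <#> K" unfolding mem_set_mult using ak by blast
qed

lemma COV:
  assumes K: "K \<lhd> G" and KM: "K \<subseteq> M" and M: "subgroup M G" and MA: "M \<subseteq> A <#> K"
    and A: "A \<subseteq> carrier G"
  shows "covers G A M K"
  unfolding covers_def
proof
  show "K <#> (A \<inter> M) \<subseteq> M" using KM subgroup.m_closed[OF M] unfolding subset_iff mem_set_mult by blast
  have Ks: "subgroup K G" using normal_imp_subgroup[OF K] .
  show "M \<subseteq> K <#> (A \<inter> M)"
  proof
    fix m assume m: "m \<in> M"
    have "m \<in> A <#> K" using m MA by blast
    then obtain a k where ak: "a \<in> A" "k \<in> K" "m = a \<otimes> k" unfolding mem_set_mult by blast
    have c: "a \<in> carrier G" "k \<in> carrier G" using ak A Ks[THEN subgroup.subset] by blast+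
    have "a = m \<otimes> inv k" using c ak(3) by (simp add: gsimps)
    moreover have "m \<otimes> inv k \<in> M" using m ak(2) KM subgroup.m_closed[OF M] subgroup.m_inv_closed[OF M] by blast
    ultimately have aM: "a \<in> M" by simp
    have "m = (a \<otimes> k \<otimes> inv a) \<otimes> a" using c ak(3) by (simp add: gsimps)
    moreover have "a \<otimes> k \<otimes> inv a \<in> K" using normal.inv_op_closed2[OF K c(1) ak(2)] .
    ultimately show "m \<in> K <#> (A \<inter> M)" unfolding mem_set_mult using ak(1) aM by blast
  qed
qed

lemma COV2:
  assumes K: "K \<lhd> G" and cv: "covers G A M K" and A: "A \<subseteq> carrier G"
  shows "M \<subseteq> A <#> K"
proof
  fix m assume "m \<in> M"
  hence "m \<in> K <#> (A \<inter> M)" using cv unfolding covers_def by simp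
  then obtain k a where ka: "k \<in> K" "a \<in> A" "m = k \<otimes> a" unfolding mem_set_mult by blast
  have c: "a \<in> carrier G" using ka A by blast
  show "m \<in> A <#> K" using swapAK[OF K c ka(1)] ka unfolding mem_set_mult by metis
qed

lemma RES:
  assumes N: "subgroup N G" and T: "T \<subseteq> A <#> Y" and XN: "T \<subseteq> N" and YN: "Y \<subseteq> N"
    and A: "A \<subseteq> carrier G"
  shows "T \<subseteq> (N \<inter> A) <#> Y"
proof
  fix x assume x: "x \<in> T"
  hence "x \<in> A <#> Y" using T by blast
  then obtain a y where ay: "a \<in> A" "y \<in> Y" "x = a \<otimes> y" unfolding mem_set_mult by blast
  have yN: "y \<in> N" using ay YN by blast
  have c: "a \<in> carrier G" "y \<in> carrier G" using ay A yN N[THEN subgroup.subset] by blast+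
  have "a = x \<otimes> inv y" using c ay(3) by (simp add: gsimps)
  moreover have "x \<otimes> inv y \<in> N" using x XN yN subgroup.m_closed[OF N] subgroup.m_inv_closed[OF N] by blast
  ultimately show "x \<in> (N \<inter> A) <#> Y" unfolding mem_set_mult using ay by blast
qed


lemma nc_iff:
  assumes A: "A \<subseteq> carrier G" and B: "B \<subseteq> carrier G"
  shows "normal_covered G A B Ns \<longleftrightarrow> sser G A B Ns"
proof -
  have "(quot_le G (Ns ! Suc i) (Ns ! i) A \<longleftrightarrow> Ns!Suc i \<subseteq> A <#> Ns!i) \<and>
        (quot_le G (Ns ! Suc i) (Ns ! i) B \<longleftrightarrow> Ns!Suc i \<subseteq> B <#> Ns!i)"
    if ns: "normal_series G Ns" and i: "Suc i < length Ns" for i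
  proof -
    have "Ns!i \<in> set Ns" "Ns!Suc i \<in> set Ns" using i by auto
    hence n: "Ns!i \<lhd> G" "Ns!Suc i \<lhd> G" using ns unfolding normal_series_def by auto
    have "Ns!Suc i \<subseteq> carrier G" using subgroup.subset[OF normal_imp_subgroup[OF n(2)]] .
    thus ?thesis using QL[OF n(1) A] QL[OF n(1) B] by blast
  qed
  thus ?thesis unfolding normal_covered_def sser_def by blast
qed

lemma cc_sser:
  assumes cc: "chief_covered G A B Ns" and A: "A \<subseteq> carrier G" and B: "B \<subseteq> carrier G"
  shows "sser G A B Ns"
proof -
  have cs: "chief_series G Ns" using cc unfolding chief_covered_def by blast
  hence ns: "normal_series G Ns" unfolding chief_series_def by blast
  have "Ns!Suc i \<subseteq> A <#> Ns!i \<or> Ns!Suc i \<subseteq> B <#> Ns!i" if i: "Suc i < length Ns" for i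
  proof -
    have "Ns!i \<in> set Ns" using i by auto
    hence n: "Ns!i \<lhd> G" using ns unfolding normal_series_def by auto
    thus ?thesis using cc i COV2[OF n _ A] COV2[OF n _ B] unfolding chief_covered_def by blast
  qed
  thus ?thesis using ns unfolding sser_def by blast
qed

lemma sser_P3:
  assumes ss: "sser G A B Ns" and A: "A \<subseteq> carrier G" and B: "B \<subseteq> carrier G"
  shows "P3 G A B"
  unfolding P3_def
proof (intro allI impI)
  fix K assume K: "K \<lhd> G" and Kne: "K \<noteq> carrier G"
  have ns: "normal_series G Ns" using ss unfolding sser_def by blast
  have ne: "Ns \<noteq> []" and hd: "hd Ns = {\<one>}" and lst: "last Ns = carrier G"
    and nrm: "\<forall>N\<in>set Ns. N \<lhd> G" using ns unfolding normal_series_def by auto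
  have Kc: "K \<subseteq> carrier G" using subgroup.subset[OF normal_imp_subgroup[OF K]] .
  define P where "P i \<longleftrightarrow> i < length Ns \<and> \<not> Ns!i \<subseteq> K" for i
  have "P (length Ns - 1)" unfolding P_def using ne lst Kc Kne last_conv_nth[OF ne] by auto
  hence Pi: "P (LEAST i. P i)" by (rule LeastI)
  define i where "i = (LEAST i. P i)"
  have Pi': "P i" using Pi i_def by simp
  have i0: "i \<noteq> 0"
  proof
    assume "i = 0"
    hence "Ns!i = {\<one>}" using hd ne hd_conv_nth by metis
    moreover have "\<one> \<in> K" using subgroup.one_closed[OF normal_imp_subgroup[OF K]] .
    ultimately show False using Pi' unfolding P_def by auto
  qed
  then obtain j where ij: "i = Suc j" by (cases i) auto
  have "\<not> P j" using not_less_Least[of j P] ij i_def by simp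
  hence NjK: "Ns!j \<subseteq> K" using Pi' ij unfolding P_def by simp
  have il: "Suc j < length Ns" using Pi' ij unfolding P_def by simp
  have Ni: "Ns!i \<lhd> G" using nrm Pi' unfolding P_def by simp
  have Nj: "Ns!j \<lhd> G" using nrm il by simp
  define M where "M = K <#> Ns!i"
  have MG: "M \<lhd> G" unfolding M_def using normal_mult[OF K Ni] .
  have Nis: "subgroup (Ns!i) G" using normal_imp_subgroup[OF Ni] .
  have Ks: "subgroup K G" using normal_imp_subgroup[OF K] .
  have KM: "K \<subseteq> M"
  proof
    fix k assume k: "k \<in> K"
    hence "k = k \<otimes> \<one>" using Kc by auto
    thus "k \<in> M" unfolding M_def mem_set_mult using k subgroup.one_closed[OF Nis] by blast
  qed
  have NM: "Ns!i \<subseteq> M"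
  proof
    fix k assume k: "k \<in> Ns!i"
    hence "k = \<one> \<otimes> k" using Nis[THEN subgroup.subset] by auto
    thus "k \<in> M" unfolding M_def mem_set_mult using k subgroup.one_closed[OF Ks] by blast
  qed
  have KM': "K \<subset> M" using KM NM Pi' unfolding P_def by blast
  have step: "Ns!i \<subseteq> A <#> Ns!j \<or> Ns!i \<subseteq> B <#> Ns!j" using ss il ij unfolding sser_def by blast
  have mono: "U <#> Ns!j \<subseteq> U <#> K" for U using NjK unfolding subset_iff mem_set_mult by blast
  have "Ns!i \<subseteq> A <#> K \<or> Ns!i \<subseteq> B <#> K"
    using step mono[of A] mono[of B] by blast
  hence "M \<subseteq> A <#> K \<or> M \<subseteq> B <#> K"
    using SUB[OF K _ A, of "Ns!i"] SUB[OF K _ B, of "Ns!i"] unfolding M_def by blast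
  thus "\<exists>M. M \<lhd> G \<and> K \<subset> M \<and> (M \<subseteq> A <#> K \<or> M \<subseteq> B <#> K)" using MG KM' by blast
qed


lemma chain_exists:
  assumes fin: "finite (carrier G)" and A: "A \<subseteq> carrier G" and B: "B \<subseteq> carrier G"
    and p3: "P3 G A B"
  shows "K \<lhd> G \<Longrightarrow> \<exists>Ns. chainc G A B K Ns"
proof (induction "card (carrier G) - card K" arbitrary: K rule: less_induct)
  case less
  have K: "K \<lhd> G" by fact
  have Kc: "K \<subseteq> carrier G" using subgroup.subset[OF normal_imp_subgroup[OF K]] .
  show ?case
  proof (cases "K = carrier G")
    case True
    have "chainc G A B K [K]" unfolding chainc_def using True K by simp
    thus ?thesis by blast
  next
    case False
    have "\<exists>M. M \<lhd> G \<and> K \<subset> M \<and> (M \<subseteq> A <#> K \<or> M \<subseteq> B <#> K)"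
      using p3[unfolded P3_def, rule_format, OF K False] .
    then obtain M0 where M0: "M0 \<lhd> G" "K \<subset> M0" "M0 \<subseteq> A <#> K \<or> M0 \<subseteq> B <#> K"
      by blast
    define S where "S = {M. M \<lhd> G \<and> K \<subset> M \<and> M \<subseteq> M0}"
    have "M0 \<in> S" using M0(1,2) unfolding S_def by simp
    then obtain M where MS: "M \<in> S" and Mmin: "\<forall>M'. M' \<in> S \<longrightarrow> card M \<le> card M'"
      using ex_has_least_nat[of "\<lambda>M. M \<in> S" M0 card] by blast
    have MG: "M \<lhd> G" and KM: "K \<subset> M" and MM0: "M \<subseteq> M0" using MS unfolding S_def by simp_all
    have Ms: "subgroup M G" using normal_imp_subgroup[OF MG] .
    have Mc: "M \<subseteq> carrier G" using subgroup.subset[OF Ms] .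
    have finM: "finite M" using Mc fin finite_subset by blast
    have chief: "\<forall>M'. M' \<lhd> G \<longrightarrow> K \<subseteq> M' \<longrightarrow> M' \<subseteq> M \<longrightarrow> M' = K \<or> M' = M"
    proof (intro allI impI)
      fix M' assume M': "M' \<lhd> G" "K \<subseteq> M'" "M' \<subseteq> M"
      show "M' = K \<or> M' = M"
      proof (cases "M' = K")
        case False
        hence "K \<subset> M'" using M'(2) by blast
        hence "M' \<in> S" using M' MM0 unfolding S_def by simp
        hence "card M \<le> card M'" using Mmin by blast
        hence "M' = M" using card_seteq[OF finM M'(3)] by blast
        thus ?thesis by blast
      qed blast
    qed
    have KMs: "K \<subseteq> M" using KM by blast
    have MAB: "M \<subseteq> A <#> K \<or> M \<subseteq> B <#> K" using M0(3) MM0 by blast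
    have cov: "covers G A M K \<or> covers G B M K"
      using MAB COV[OF K KMs Ms _ A] COV[OF K KMs Ms _ B] by blast
    have "card K < card M" using psubset_card_mono[OF finM KM] .
    moreover have "card M \<le> card (carrier G)" using card_mono[OF fin Mc] .
    ultimately have "card (carrier G) - card M < card (carrier G) - card K" by linarith
    then obtain Ms' where Ms': "chainc G A B M Ms'" using less.hyps MG by blast
    have Mne: "Ms' \<noteq> []" using Ms' unfolding chainc_def by simp
    have Mhd: "hd Ms' = M" using Ms' unfolding chainc_def by simp
    have Mlast: "last Ms' = carrier G" using Ms' unfolding chainc_def by simp
    have Mnorm: "\<forall>N\<in>set Ms'. N \<lhd> G" using Ms' unfolding chainc_def by simp
    have Mstep: "\<forall>i. Suc i < length Ms' \<longrightarrow> Ms' ! i \<subset> Ms' ! Suc i \<and>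
        (\<forall>M. M \<lhd> G \<longrightarrow> Ms' ! i \<subseteq> M \<longrightarrow> M \<subseteq> Ms' ! Suc i \<longrightarrow> M = Ms' ! i \<or> M = Ms' ! Suc i) \<and>
        (covers G A (Ms' ! Suc i) (Ms' ! i) \<or> covers G B (Ms' ! Suc i) (Ms' ! i))"
      using Ms' unfolding chainc_def by simp
    have h0: "Ms' ! 0 = M" using Mne Mhd hd_conv_nth by metis
    have stp: "(K # Ms') ! i \<subset> (K # Ms') ! Suc i \<and>
        (\<forall>M'. M' \<lhd> G \<longrightarrow> (K # Ms') ! i \<subseteq> M' \<longrightarrow> M' \<subseteq> (K # Ms') ! Suc i \<longrightarrow> M' = (K # Ms') ! i \<or> M' = (K # Ms') ! Suc i) \<and>
        (covers G A ((K # Ms') ! Suc i) ((K # Ms') ! i) \<or> covers G B ((K # Ms') ! Suc i) ((K # Ms') ! i))"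
      if i: "Suc i < length (K # Ms')" for i
    proof (cases i)
      case 0
      have e: "(K # Ms') ! i = K" "(K # Ms') ! Suc i = M" using 0 h0 by simp_all
      show ?thesis unfolding e using KM chief cov by blast
    next
      case (Suc j)
      have e: "(K # Ms') ! i = Ms' ! j" "(K # Ms') ! Suc i = Ms' ! Suc j" using Suc by simp_all
      have "Suc j < length Ms'" using i Suc by simp
      hence "Ms' ! j \<subset> Ms' ! Suc j \<and>
        (\<forall>M. M \<lhd> G \<longrightarrow> Ms' ! j \<subseteq> M \<longrightarrow> M \<subseteq> Ms' ! Suc j \<longrightarrow> M = Ms' ! j \<or> M = Ms' ! Suc j) \<and>
        (covers G A (Ms' ! Suc j) (Ms' ! j) \<or> covers G B (Ms' ! Suc j) (Ms' ! j))" using Mstep by blast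
      thus ?thesis unfolding e .
    qed
    have "chainc G A B K (K # Ms')"
      unfolding chainc_def
    proof (intro conjI)
      show "K # Ms' \<noteq> []" by simp
      show "hd (K # Ms') = K" by simp
      show "last (K # Ms') = carrier G" using Mne Mlast by simp
      show "\<forall>N\<in>set (K # Ms'). N \<lhd> G" using Mnorm K by simp
      show "\<forall>i. Suc i < length (K # Ms') \<longrightarrow> (K # Ms') ! i \<subset> (K # Ms') ! Suc i \<and>
        (\<forall>M. M \<lhd> G \<longrightarrow> (K # Ms') ! i \<subseteq> M \<longrightarrow> M \<subseteq> (K # Ms') ! Suc i \<longrightarrow> M = (K # Ms') ! i \<or> M = (K # Ms') ! Suc i) \<and>
        (covers G A ((K # Ms') ! Suc i) ((K # Ms') ! i) \<or> covers G B ((K # Ms') ! Suc i) ((K # Ms') ! i))"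
        using stp by blast
    qed
    thus ?thesis by blast
  qed
qed

lemma chief_exists:
  assumes fin: "finite (carrier G)" and A: "A \<subseteq> carrier G" and B: "B \<subseteq> carrier G"
    and p3: "P3 G A B"
  shows "\<exists>Ns. chief_covered G A B Ns"
proof -
  obtain Ns where c: "chainc G A B {\<one>} Ns" using chain_exists[OF assms one_is_normal] by blast
  have "chief_covered G A B Ns"
  proof -
    have a: "Ns \<noteq> []" "hd Ns = {\<one>}" "last Ns = carrier G" "\<forall>N\<in>set Ns. N \<lhd> G"
      using c unfolding chainc_def by simp_all
    have st: "\<forall>i. Suc i < length Ns \<longrightarrow> Ns ! i \<subset> Ns ! Suc i \<and>
        (\<forall>M. M \<lhd> G \<longrightarrow> Ns ! i \<subseteq> M \<longrightarrow> M \<subseteq> Ns ! Suc i \<longrightarrow> M = Ns ! i \<or> M = Ns ! Suc i) \<and>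
        (covers G A (Ns ! Suc i) (Ns ! i) \<or> covers G B (Ns ! Suc i) (Ns ! i))"
      using c unfolding chainc_def by simp
    have "normal_series G Ns" unfolding normal_series_def using a st by blast
    moreover have "chief_series G Ns" unfolding chief_series_def using calculation st by blast
    ultimately show ?thesis unfolding chief_covered_def using st by blast
  qed
  thus ?thesis by blast
qed


lemma sser_fact:
  assumes ss: "sser G A B Ns" and A: "subgroup A G" and B: "subgroup B G"
  shows "i < length Ns \<Longrightarrow> Ns!i = (Ns!i \<inter> A) <#> (Ns!i \<inter> B)"
proof (induction i)
  have ns: "normal_series G Ns" using ss unfolding sser_def by simp
  case 0
  have "Ns \<noteq> []" "hd Ns = {\<one>}" using ns unfolding normal_series_def by simp_all
  hence "Ns!0 = {\<one>}" using hd_conv_nth by metis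
  moreover have "{\<one>} \<inter> A = {\<one>}" "{\<one>} \<inter> B = {\<one>}" using subgroup.one_closed[OF A] subgroup.one_closed[OF B] by auto
  ultimately show ?case by (simp add: set_mult_def)
next
  case (Suc i)
  have ns: "normal_series G Ns" using ss unfolding sser_def by simp
  have nsl: "\<forall>N\<in>set Ns. N \<lhd> G" using ns unfolding normal_series_def by simp
  have asc: "\<forall>i. Suc i < length Ns \<longrightarrow> Ns!i \<subseteq> Ns!Suc i" using ns unfolding normal_series_def by simp
  have stp: "\<forall>i. Suc i < length Ns \<longrightarrow> Ns!Suc i \<subseteq> A <#> Ns!i \<or> Ns!Suc i \<subseteq> B <#> Ns!i"
    using ss unfolding sser_def by simp
  define N where "N = Ns!i"
  define N' where "N' = Ns!Suc i"
  have IH: "N = (N \<inter> A) <#> (N \<inter> B)" using Suc N_def by simp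
  have NN': "N \<subseteq> N'" using asc Suc.prems unfolding N_def N'_def by simp
  have Nn: "N \<lhd> G" "N' \<lhd> G" using nsl Suc.prems unfolding N_def N'_def by simp_all
  have N's: "subgroup N' G" using normal_imp_subgroup[OF Nn(2)] .
  have Ns: "subgroup N G" using normal_imp_subgroup[OF Nn(1)] .
  have step: "N' \<subseteq> A <#> N \<or> N' \<subseteq> B <#> N" using stp Suc.prems unfolding N_def N'_def by simp
  have sup: "(N' \<inter> A) <#> (N' \<inter> B) \<subseteq> N'"
    using subgroup.m_closed[OF N's] unfolding subset_iff mem_set_mult by blast
  have sub: "N' \<subseteq> (N' \<inter> A) <#> (N' \<inter> B)"
  proof
    fix x assume x: "x \<in> N'"
    have xc: "x \<in> carrier G" using x N's[THEN subgroup.subset] by blast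
    show "x \<in> (N' \<inter> A) <#> (N' \<inter> B)"
    proof (cases "N' \<subseteq> A <#> N")
      case True
      hence "x \<in> A <#> N" using x by blast
      then obtain a n where an: "a \<in> A" "n \<in> N" "x = a \<otimes> n" unfolding mem_set_mult by blast
      have "n \<in> (N \<inter> A) <#> (N \<inter> B)" using an(2) IH by simp
      then obtain a1 b1 where ab: "a1 \<in> N \<inter> A" "b1 \<in> N \<inter> B" "n = a1 \<otimes> b1"
        unfolding mem_set_mult by blast
      have c: "a \<in> carrier G" "a1 \<in> carrier G" "b1 \<in> carrier G" using an ab A[THEN subgroup.subset] B[THEN subgroup.subset] by blast+
      have "x = a \<otimes> (a1 \<otimes> b1)" using an(3) ab(3) by simp
      hence e: "x = (a \<otimes> a1) \<otimes> b1" using c by (simp add: gsimps)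
      have "(a \<otimes> a1) \<otimes> b1 \<otimes> inv b1 = a \<otimes> a1" using c by (simp add: gsimps)
      hence "a \<otimes> a1 = x \<otimes> inv b1" using e by simp
      moreover have "x \<otimes> inv b1 \<in> N'" using x ab(2) NN' subgroup.m_closed[OF N's] subgroup.m_inv_closed[OF N's] by blast
      moreover have "a \<otimes> a1 \<in> A" using an ab subgroup.m_closed[OF A] by blast
      ultimately have h: "a \<otimes> a1 \<in> N' \<inter> A" by simp
      have "b1 \<in> N' \<inter> B" using ab NN' by blast
      thus ?thesis unfolding mem_set_mult using e h by blast
    next
      case False
      hence "N' \<subseteq> B <#> N" using step by blast
      hence "x \<in> B <#> N" using x by blast
      then obtain b n where bn: "b \<in> B" "n \<in> N" "x = b \<otimes> n" unfolding mem_set_mult by blast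
      have bc: "b \<in> carrier G" "n \<in> carrier G" using bn B[THEN subgroup.subset] Ns[THEN subgroup.subset] by blast+
      have "b \<otimes> n \<otimes> inv b \<in> N" using normal.inv_op_closed2[OF Nn(1) bc(1) bn(2)] .
      hence "b \<otimes> n \<otimes> inv b \<in> (N \<inter> A) <#> (N \<inter> B)" using IH by simp
      then obtain a1 b1 where ab: "a1 \<in> N \<inter> A" "b1 \<in> N \<inter> B" "b \<otimes> n \<otimes> inv b = a1 \<otimes> b1"
        unfolding mem_set_mult by blast
      have c: "a1 \<in> carrier G" "b1 \<in> carrier G" using ab A[THEN subgroup.subset] B[THEN subgroup.subset] by blast+
      have "(b \<otimes> n \<otimes> inv b) \<otimes> b = b \<otimes> n" using bc by (simp add: gsimps)
      hence "x = (b \<otimes> n \<otimes> inv b) \<otimes> b" using bn(3) by simp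
      hence "x = (a1 \<otimes> b1) \<otimes> b" using ab(3) by simp
      hence e: "x = a1 \<otimes> (b1 \<otimes> b)" using c bc by (simp add: gsimps)
      have "inv a1 \<otimes> (a1 \<otimes> (b1 \<otimes> b)) = b1 \<otimes> b" using c bc by (simp add: gsimps)
      hence "b1 \<otimes> b = inv a1 \<otimes> x" using e by simp
      moreover have "inv a1 \<otimes> x \<in> N'" using x ab(1) NN' subgroup.m_closed[OF N's] subgroup.m_inv_closed[OF N's] by blast
      moreover have "b1 \<otimes> b \<in> B" using bn ab subgroup.m_closed[OF B] by blast
      ultimately have h: "b1 \<otimes> b \<in> N' \<inter> B" by simp
      have "a1 \<in> N' \<inter> A" using ab NN' by blast
      thus ?thesis unfolding mem_set_mult using e h by blast
    qed
  qed
  show ?case using sub sup N'_def by blast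
qed


lemma sub_core:
  assumes fin: "finite (carrier G)" and A: "subgroup A G" and B: "subgroup B G"
    and ss: "sser G A B Ns" and j: "j < length Ns" and ne: "Ns!j \<noteq> {\<one>}"
  shows "core_factorisation (G\<lparr>carrier := Ns!j\<rparr>) (Ns!j \<inter> A) (Ns!j \<inter> B)"
proof -
  define N where "N = Ns!j"
  define H where "H = G\<lparr>carrier := N\<rparr>"
  have ns: "normal_series G Ns" using ss unfolding sser_def by simp
  have nsl: "\<forall>N\<in>set Ns. N \<lhd> G" using ns unfolding normal_series_def by simp
  have asc: "\<forall>i. Suc i < length Ns \<longrightarrow> Ns!i \<subseteq> Ns!Suc i" using ns unfolding normal_series_def by simp
  have Nne: "Ns \<noteq> []" and hdN: "hd Ns = {\<one>}" using ns unfolding normal_series_def by simp_all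
  have stp: "\<forall>i. Suc i < length Ns \<longrightarrow> Ns!Suc i \<subseteq> A <#> Ns!i \<or> Ns!Suc i \<subseteq> B <#> Ns!i"
    using ss unfolding sser_def by simp
  have NG: "N \<lhd> G" using nsl j unfolding N_def by simp
  have Nsub: "subgroup N G" using normal_imp_subgroup[OF NG] .
  have grpH: "group H" unfolding H_def using subgroup.subgroup_is_group[OF Nsub is_group] .
  have finH: "finite (carrier H)" unfolding H_def using fin Nsub[THEN subgroup.subset] finite_subset by simp
  have fact: "N = (N \<inter> A) <#> (N \<inter> B)" using sser_fact[OF ss A B j] unfolding N_def .
  have A's: "subgroup (N \<inter> A) G" using subgroups_Inter_pair[OF Nsub A] .
  have B's: "subgroup (N \<inter> B) G" using subgroups_Inter_pair[OF Nsub B] .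
  have A'H: "subgroup (N \<inter> A) H" unfolding H_def using subgroup_incl[OF A's Nsub] by blast
  have B'H: "subgroup (N \<inter> B) H" unfolding H_def using subgroup_incl[OF B's Nsub] by blast
  have A'c: "N \<inter> A \<subseteq> carrier H" and B'c: "N \<inter> B \<subseteq> carrier H" unfolding H_def by auto
  have smH: "set_mult H = set_mult G" unfolding H_def by (rule set_mult_restr)
  define Ns' where "Ns' = take (Suc j) Ns"
  have len': "length Ns' = Suc j" unfolding Ns'_def using j by simp
  have nth': "i < Suc j \<Longrightarrow> Ns'!i = Ns!i" for i unfolding Ns'_def by simp
  have leN: "i \<le> j \<Longrightarrow> Ns!i \<subseteq> N" for i unfolding N_def using asc_mono[OF asc j] by blast
  have ss': "sser H (N \<inter> A) (N \<inter> B) Ns'"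
    unfolding sser_def normal_series_def
  proof (intro conjI allI impI)
    show "Ns' \<noteq> []" unfolding Ns'_def using Nne by simp
    show "hd Ns' = {\<one>\<^bsub>H\<^esub>}" unfolding Ns'_def H_def using Nne hdN by simp
    have "last Ns' = Ns'!j" using len' last_conv_nth[of Ns'] by (metis diff_Suc_1 length_0_conv nat.distinct(1))
    thus "last Ns' = carrier H" unfolding H_def N_def using nth'[of j] by simp
    show "\<forall>Z\<in>set Ns'. Z \<lhd> H"
    proof
      fix Z assume "Z \<in> set Ns'"
      then obtain i where i: "i < Suc j" "Z = Ns'!i" using len' in_set_conv_nth by metis
      hence Z: "Z = Ns!i" using nth' by simp
      have ZG: "Z \<lhd> G" using nsl i(1) j Z by simp
      have ZN: "Z \<subseteq> N" using leN[of i] i(1) Z by simp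
      show "Z \<lhd> H" unfolding H_def using normal_restrict_supergroup[OF Nsub ZG ZN] .
    qed
    fix i assume i: "Suc i < length Ns'"
    hence i': "Suc i < Suc j" using len' by simp
    show "Ns'!i \<subseteq> Ns'!Suc i" using asc i' j nth'[of i] nth'[of "Suc i"] by simp
    have s1: "Ns!Suc i \<subseteq> A <#> Ns!i \<or> Ns!Suc i \<subseteq> B <#> Ns!i" using stp i' j by simp
    have n1: "Ns!Suc i \<subseteq> N" "Ns!i \<subseteq> N" using leN i' by simp_all
    have "Ns!Suc i \<subseteq> (N \<inter> A) <#> Ns!i \<or> Ns!Suc i \<subseteq> (N \<inter> B) <#> Ns!i"
      using s1 RES[OF Nsub _ n1(1) n1(2)] A[THEN subgroup.subset] B[THEN subgroup.subset] by blast
    thus "Ns'!Suc i \<subseteq> (N \<inter> A) <#>\<^bsub>H\<^esub> Ns'!i \<or> Ns'!Suc i \<subseteq> (N \<inter> B) <#>\<^bsub>H\<^esub> Ns'!i"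
      using smH nth'[of i] nth'[of "Suc i"] i' by simp
  qed
  have p3: "P3 H (N \<inter> A) (N \<inter> B)" using group.sser_P3[OF grpH ss' A'c B'c] .
  obtain Ms where "chief_covered H (N \<inter> A) (N \<inter> B) Ms"
    using group.chief_exists[OF grpH finH A'c B'c p3] by blast
  moreover have "carrier H \<noteq> {\<one>\<^bsub>H\<^esub>}" unfolding H_def N_def using ne by simp
  moreover have "(N \<inter> A) <#>\<^bsub>H\<^esub> (N \<inter> B) = carrier H" using smH fact unfolding H_def by simp
  ultimately have "core_factorisation H (N \<inter> A) (N \<inter> B)"
    unfolding core_factorisation_def using A'H B'H by blast
  thus ?thesis unfolding H_def N_def .
qed

lemma sser_terms:
  assumes fin: "finite (carrier G)" and A: "subgroup A G" and B: "subgroup B G"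
    and ss: "sser G A B Ns"
  shows "\<forall>N\<in>set Ns. N = (N \<inter> A) <#> (N \<inter> B) \<and>
          (N \<noteq> {\<one>} \<longrightarrow> core_factorisation (G\<lparr>carrier := N\<rparr>) (N \<inter> A) (N \<inter> B))"
proof
  fix N assume "N \<in> set Ns"
  then obtain j where j: "j < length Ns" "N = Ns!j" using in_set_conv_nth by metis
  show "N = (N \<inter> A) <#> (N \<inter> B) \<and>
          (N \<noteq> {\<one>} \<longrightarrow> core_factorisation (G\<lparr>carrier := N\<rparr>) (N \<inter> A) (N \<inter> B))"
    using sser_fact[OF ss A B j(1)] sub_core[OF fin A B ss j(1)] j(2) by simp
qed

lemma P3_iff:
  assumes A: "A \<subseteq> carrier G" and B: "B \<subseteq> carrier G"
  shows "P3 G A B \<longleftrightarrow> (\<forall>K. K \<lhd> G \<longrightarrow> K \<noteq> carrier G \<longrightarrow>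
            (\<exists>M. M \<lhd> G \<and> K \<subset> M \<and> (quot_le G M K A \<or> quot_le G M K B)))"
proof -
  have "(quot_le G M K A \<longleftrightarrow> M \<subseteq> A <#> K) \<and> (quot_le G M K B \<longleftrightarrow> M \<subseteq> B <#> K)"
    if "K \<lhd> G" "M \<lhd> G" for K M
    using QL[OF that(1) A] QL[OF that(1) B] subgroup.subset[OF normal_imp_subgroup[OF that(2)]] by simp
  thus ?thesis unfolding P3_def by metis
qed

end

theorem mainTheorem1:
  fixes G (structure) and A B :: "'a set"
  assumes "group G" and "finite (carrier G)" and "carrier G \<noteq> {\<one>}"
    and "subgroup A G" and "subgroup B G" and "A <#> B = carrier G"
  shows "(core_factorisation G A B \<longleftrightarrow> (\<exists>Ns. normal_covered G A B Ns))
    \<and> ((\<exists>Ns. normal_covered G A B Ns) \<longleftrightarrow>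
         (\<forall>K. K \<lhd> G \<longrightarrow> K \<noteq> carrier G \<longrightarrow>
            (\<exists>M. M \<lhd> G \<and> K \<subset> M \<and> (quot_le G M K A \<or> quot_le G M K B))))
    \<and> (\<forall>Ns. chief_covered G A B Ns \<longrightarrow> (\<forall>N\<in>set Ns.
          N = (N \<inter> A) <#> (N \<inter> B) \<and>
          (N \<noteq> {\<one>} \<longrightarrow> core_factorisation (G\<lparr>carrier := N\<rparr>) (N \<inter> A) (N \<inter> B))))
    \<and> (\<forall>Ns. normal_covered G A B Ns \<longrightarrow> (\<forall>N\<in>set Ns.
          N = (N \<inter> A) <#> (N \<inter> B) \<and>
          (N \<noteq> {\<one>} \<longrightarrow> core_factorisation (G\<lparr>carrier := N\<rparr>) (N \<inter> A) (N \<inter> B))))"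
proof -
  interpret group G by fact
  have fin: "finite (carrier G)" by fact
  have As: "subgroup A G" and Bs: "subgroup B G" by fact+
  have Ac: "A \<subseteq> carrier G" and Bc: "B \<subseteq> carrier G" using As Bs subgroup.subset by auto
  have nc_P3: "(\<exists>Ns. normal_covered G A B Ns) \<longleftrightarrow> P3 G A B"
  proof
    assume "\<exists>Ns. normal_covered G A B Ns"
    then obtain Ns where "normal_covered G A B Ns" by blast
    hence "sser G A B Ns" using nc_iff[OF Ac Bc] by simp
    thus "P3 G A B" using sser_P3[OF _ Ac Bc] by simp
  next
    assume "P3 G A B"
    then obtain Ns where "chief_covered G A B Ns" using chief_exists[OF fin Ac Bc] by blast
    hence "sser G A B Ns" using cc_sser[OF _ Ac Bc] by simp
    hence "normal_covered G A B Ns" using nc_iff[OF Ac Bc] by simp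
    thus "\<exists>Ns. normal_covered G A B Ns" by blast
  qed
  have E1: "core_factorisation G A B \<longleftrightarrow> (\<exists>Ns. normal_covered G A B Ns)"
  proof
    assume "core_factorisation G A B"
    then obtain Ns where "chief_covered G A B Ns" unfolding core_factorisation_def by blast
    hence "sser G A B Ns" using cc_sser[OF _ Ac Bc] by simp
    hence "normal_covered G A B Ns" using nc_iff[OF Ac Bc] by simp
    thus "\<exists>Ns. normal_covered G A B Ns" by blast
  next
    assume "\<exists>Ns. normal_covered G A B Ns"
    hence "P3 G A B" using nc_P3 by simp
    then obtain Ns where "chief_covered G A B Ns" using chief_exists[OF fin Ac Bc] by blast
    thus "core_factorisation G A B" unfolding core_factorisation_def using assms by blast
  qed
  have E2: "(\<exists>Ns. normal_covered G A B Ns) \<longleftrightarrow>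
         (\<forall>K. K \<lhd> G \<longrightarrow> K \<noteq> carrier G \<longrightarrow>
            (\<exists>M. M \<lhd> G \<and> K \<subset> M \<and> (quot_le G M K A \<or> quot_le G M K B)))"
    using nc_P3 P3_iff[OF Ac Bc] by simp
  have E3: "\<forall>Ns. chief_covered G A B Ns \<longrightarrow> (\<forall>N\<in>set Ns.
          N = (N \<inter> A) <#> (N \<inter> B) \<and>
          (N \<noteq> {\<one>} \<longrightarrow> core_factorisation (G\<lparr>carrier := N\<rparr>) (N \<inter> A) (N \<inter> B)))"
  proof (intro allI impI)
    fix Ns assume "chief_covered G A B Ns"
    hence "sser G A B Ns" using cc_sser[OF _ Ac Bc] by simp
    thus "\<forall>N\<in>set Ns. N = (N \<inter> A) <#> (N \<inter> B) \<and>
          (N \<noteq> {\<one>} \<longrightarrow> core_factorisation (G\<lparr>carrier := N\<rparr>) (N \<inter> A) (N \<inter> B))"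
      using sser_terms[OF fin As Bs] by simp
  qed
  have E4: "\<forall>Ns. normal_covered G A B Ns \<longrightarrow> (\<forall>N\<in>set Ns.
          N = (N \<inter> A) <#> (N \<inter> B) \<and>
          (N \<noteq> {\<one>} \<longrightarrow> core_factorisation (G\<lparr>carrier := N\<rparr>) (N \<inter> A) (N \<inter> B)))"
  proof (intro allI impI)
    fix Ns assume "normal_covered G A B Ns"
    hence "sser G A B Ns" using nc_iff[OF Ac Bc] by simp
    thus "\<forall>N\<in>set Ns. N = (N \<inter> A) <#> (N \<inter> B) \<and>
          (N \<noteq> {\<one>} \<longrightarrow> core_factorisation (G\<lparr>carrier := N\<rparr>) (N \<inter> A) (N \<inter> B))"
      using sser_terms[OF fin As Bs] by simp
  qed
  show ?thesis using E1 E2 E3 E4 by blast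
qed

end
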